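(* In the setting of the context, with $R(t)=-\frac{\gamma}{\beta}\log\varphi^{-1}(t)$, we have $R(\infty):=\lim_{t\to\infty}R(t)=\alpha$, \[ R(\infty)=N-\tilde S e^{(\beta/\gamma)\tilde R}e^{-(\beta/\gamma)R(\infty)}, \] and $R$ is increasing on $[0,\infty)$ with $\tilde R\le R(t)<\alpha=R(\infty)$ for all $t\ge0$.
   Context: Let $\beta,\gamma,\delta>0$ be constants and $\tilde S,\tilde E,\tilde I,\tilde R$ real numbers with $N:=\tilde S+\tilde E+\tilde I+\tilde R>0$. Standing assumptions: (A1) $\tilde I>0$; (A2) $\tilde E>(\gamma/\delta)\tilde I$; (A3) $\tilde S>\delta\tilde E/(\beta\tilde I)$; (A4) $\tilde R\ge 0$ and $N>\tilde S e^{(\beta/\gamma)\tilde R}+\tilde R$. Let $\alpha$ be the unique solution in $(\tilde R,N)$ of $x=N-\tilde S e^{(\beta/\gamma)\tilde R}e^{-(\beta/\gamma)x}$, and assume (A5) $\tilde S<(\gamma/\beta)e^{(\beta/\gamma)(\alpha-\tilde R)}$. Put $u_0:=e^{-(\beta/\gamma)\tilde R}$, $u_\infty:=e^{-(\beta/\gamma)\alpha}$. Let $\psi$ be the unique function, continuous and positive on $(u_\infty,u_0]$ and $C^1$ on $(u_\infty,u_0)$, satisfying $\psi'(u)\psi(u)-\frac{\gamma+\delta}{u}\psi(u)=-\delta\,\frac{\beta N-\beta\tilde S e^{(\beta/\gamma)\tilde R}u+\gamma\log u}{u}$ on $(u_\infty,u_0)$ and $\psi(u_0)=\beta\tilde I$.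 Let $\varphi(u):=\int_u^{u_0}\frac{d\xi}{\xi\psi(\xi)}$; $\varphi$ is a strictly decreasing continuous bijection from $(u_\infty,u_0]$ onto $[0,\infty)$, with inverse $\varphi^{-1}:[0,\infty)\to(u_\infty,u_0]$. *)

theory Defs
  imports "HOL-Analysis.Analysis"
begin

definition seir_phi :: "(real \<Rightarrow> real) \<Rightarrow> real \<Rightarrow> real \<Rightarrow> real" where
  "seir_phi \<psi> u0 u = integral {u..u0} (\<lambda>\<xi>. 1 / (\<xi> * \<psi> \<xi>))"

end

theory Submission
  imports Defs
begin

theorem theorem7:
  fixes \<beta> \<gamma> \<delta> S E I Rt N \<alpha> u0 uinf :: real
    and \<psi> \<psi>' :: "real \<Rightarrow> real"
  assumes pos: "\<beta> > 0" "\<gamma> > 0" "\<delta> > 0"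
    and N_def: "N = S + E + I + Rt" and N_pos: "N > 0"
    and A1: "I > 0"
    and A2: "E > (\<gamma> / \<delta>) * I"
    and A3: "S > \<delta> * E / (\<beta> * I)"
    and A4: "Rt \<ge> 0" "N > S * exp ((\<beta> / \<gamma>) * Rt) + Rt"
    and alpha_in: "\<alpha> \<in> {Rt<..<N}"
    and alpha_eq: "\<alpha> = N - S * exp ((\<beta> / \<gamma>) * Rt) * exp (- (\<beta> / \<gamma>) * \<alpha>)"
    and alpha_unique: "\<forall>x\<in>{Rt<..<N}. x = N - S * exp ((\<beta> / \<gamma>) * Rt) * exp (- (\<beta> / \<gamma>) * x) \<longrightarrow> x = \<alpha>"
    and A5: "S < (\<gamma> / \<beta>) * exp ((\<beta> / \<gamma>) * (\<alpha> - Rt))"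
    and u0_def: "u0 = exp (- (\<beta> / \<gamma>) * Rt)"
    and uinf_def: "uinf = exp (- (\<beta> / \<gamma>) * \<alpha>)"
    and psi_cont: "continuous_on {uinf<..u0} \<psi>"
    and psi_pos: "\<forall>u\<in>{uinf<..u0}. \<psi> u > 0"
    and psi_deriv: "\<forall>u\<in>{uinf<..<u0}. (\<psi> has_real_derivative \<psi>' u) (at u)"
    and psi'_cont: "continuous_on {uinf<..<u0} \<psi>'"
    and psi_ode: "\<forall>u\<in>{uinf<..<u0}. \<psi>' u * \<psi> u - (\<gamma> + \<delta>) / u * \<psi> u
                  = - \<delta> * (\<beta> * N - \<beta> * S * exp ((\<beta> / \<gamma>) * Rt) * u + \<gamma> * ln u) / u"
    and psi_init: "\<psi> u0 = \<beta> * I"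
    and phi_cont: "continuous_on {uinf<..u0} (seir_phi \<psi> u0)"
    and phi_decr: "strict_antimono_on {uinf<..u0} (seir_phi \<psi> u0)"
    and phi_bij: "bij_betw (seir_phi \<psi> u0) {uinf<..u0} {0..}"
  shows "let R = (\<lambda>t. - (\<gamma> / \<beta>) * ln (the_inv_into {uinf<..u0} (seir_phi \<psi> u0) t)) in
           (R \<longlongrightarrow> \<alpha>) at_top
         \<and> Lim at_top R = N - S * exp ((\<beta> / \<gamma>) * Rt) * exp (- (\<beta> / \<gamma>) * Lim at_top R)
         \<and> strict_mono_on {0..} R
         \<and> (\<forall>t\<ge>0. Rt \<le> R t \<and> R t < \<alpha> \<and> \<alpha> = Lim at_top R)"
proof -
  define phi where "phi = seir_phi \<psi> u0"
  define g where "g = the_inv_into {uinf<..u0} phi"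
  have bij: "bij_betw phi {uinf<..u0} {0..}" using phi_bij phi_def by simp
  have gin: "g t \<in> {uinf<..u0}" if "t \<ge> 0" for t
    using bij_betw_the_inv_into[OF bij] that unfolding g_def bij_betw_def by auto
  have phig: "phi (g t) = t" if "t \<ge> 0" for t
    unfolding g_def using bij that
    by (metis atLeast_iff bij_betw_def f_the_inv_into_f)
  have dec: "phi x > phi y" if "x \<in> {uinf<..u0}" "y \<in> {uinf<..u0}" "x < y" for x y
    using phi_decr that unfolding phi_def monotone_on_def by auto
  have ginf: "uinf > 0" using uinf_def by simp
  have ulu: "uinf < u0" using alpha_in pos unfolding uinf_def u0_def by (auto simp: divide_strict_right_mono)
  have gdec: "g s < g t" if "0 \<le> t" "t < s" for s t
  proof (rule ccontr)
    assume "\<not> g s < g t"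
    hence "g t \<le> g s" by simp
    moreover have "g t \<noteq> g s" using phig[of t] phig[of s] that by force
    ultimately have "phi (g t) > phi (g s)" using dec gin that by auto
    thus False using phig[of t] phig[of s] that by simp
  qed
  have glim: "(g \<longlongrightarrow> uinf) at_top"
  proof (rule tendstoI)
    fix e :: real assume e: "e > 0"
    define u where "u = min (uinf + e/2) u0"
    have uin: "u \<in> {uinf<..u0}" using e ulu u_def by auto
    define T where "T = phi u"
    have T0: "T \<ge> 0" using bij uin T_def unfolding bij_betw_def by auto
    have "g t < u" if "t > T" for t
    proof (rule ccontr)
      assume "\<not> g t < u"
      hence "u \<le> g t" by simp
      hence "phi (g t) \<le> phi u" using dec[of u "g t"] uin gin[of t] that T0
        by (cases "u = g t") auto
      thus False using phig[of t] that T0 T_def by simp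
    qed
    hence "\<forall>\<^sub>F t in at_top. g t < u"
      by (meson eventually_at_top_dense)
    moreover have "\<forall>\<^sub>F t in at_top. (t::real) \<ge> 0" using eventually_ge_at_top[of "0::real"] by simp
    ultimately show "\<forall>\<^sub>F t in at_top. dist (g t) uinf < e"
    proof eventually_elim
      case (elim t)
      then show ?case using gin[of t] u_def e by (auto simp: dist_real_def)
    qed
  qed
  define R where "R = (\<lambda>t. - (\<gamma> / \<beta>) * ln (g t))"
  have lnuinf: "ln uinf = - (\<beta> / \<gamma>) * \<alpha>" using uinf_def by simp
  have Rlim: "(R \<longlongrightarrow> \<alpha>) at_top"
  proof -
    have "((\<lambda>t. ln (g t)) \<longlongrightarrow> ln uinf) at_top"
      using glim ginf by (intro tendsto_ln) auto
    hence "(R \<longlongrightarrow> - (\<gamma> / \<beta>) * ln uinf) at_top"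
      unfolding R_def by (intro tendsto_mult) auto
    moreover have "- (\<gamma> / \<beta>) * ln uinf = \<alpha>" using lnuinf pos by simp
    ultimately show ?thesis by simp
  qed
  have LimR: "Lim at_top R = \<alpha>" using Rlim by (simp add: tendsto_Lim)
  have Rmono: "strict_mono_on {0..} R"
  proof (rule strict_mono_onI)
    fix t s :: real assume "t \<in> {0..}" "s \<in> {0..}" "t < s"
    hence "g s < g t" using gdec by auto
    moreover have "g s > 0" using gin[of s] ginf \<open>s \<in> {0..}\<close> by auto
    ultimately have "ln (g s) < ln (g t)" by simp
    hence "\<gamma> * ln (g s) < \<gamma> * ln (g t)" using pos by simp
    hence "\<gamma> * ln (g s) / \<beta> < \<gamma> * ln (g t) / \<beta>" using pos
      by (simp add: divide_strict_right_mono)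
    thus "R t < R s" unfolding R_def by simp
  qed
  have bounds: "Rt \<le> R t \<and> R t < \<alpha>" if "t \<ge> 0" for t
  proof -
    have gt: "uinf < g t" "g t \<le> u0" using gin[OF that] by auto
    have "ln (g t) \<le> ln u0" using gt ginf by simp
    moreover have "ln u0 = - (\<beta> / \<gamma>) * Rt" using u0_def by simp
    moreover have "ln uinf < ln (g t)" using gt ginf by simp
    ultimately have "- (\<beta> / \<gamma>) * \<alpha> < ln (g t)" "ln (g t) \<le> - (\<beta> / \<gamma>) * Rt"
      using lnuinf by auto
    hence "- (\<beta> * \<alpha>) < \<gamma> * ln (g t)" "\<gamma> * ln (g t) \<le> - (\<beta> * Rt)"
      using pos by (simp_all add: field_simps)
    hence "- (\<gamma> * ln (g t)) / \<beta> < \<alpha>" "Rt \<le> - (\<gamma> * ln (g t)) / \<beta>"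
      using pos by (simp_all add: field_simps)
    thus ?thesis unfolding R_def by simp
  qed
  show ?thesis
    unfolding Let_def
    using Rlim LimR Rmono bounds alpha_eq
    unfolding R_def g_def phi_def by auto
qed

end
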